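(* For every $p\ge2$ and $\alpha\ge0$, the following hold in $\mathbb R^N\setminus\{0\}$: \[ \mathcal L_pd=\frac{(Q-1)|\nabla_{\mathcal L}d|^p}{d},\qquad \nabla_{\mathcal L}|\nabla_{\mathcal L}d|\cdot\nabla_{\mathcal L}d=0,\qquad \operatorname{div}_{\mathcal L}\Big(\frac{|\nabla_{\mathcal L}d|^{\alpha+p-2}\nabla_{\mathcal L}d}{d^{Q-1}}\Big)=0. \]
   Context: Vector fields and operators. On $\mathbb R^N$ take $h\le N$ vector fields $X_i=\sum_{j=1}^N\sigma_{i,j}\partial_{x_j}$ with $\sigma_{i,j},\partial_{x_j}\sigma_{i,j}\in C(\mathbb R^N)$. Let $\sigma=(\sigma_{i,j})$ and $\nabla_{\mathcal L}=(X_1,\dots,X_h)=\sigma\nabla$. Set $\operatorname{div}_{\mathcal L}Z=\operatorname{div}(\sigma^TZ)$ and $\mathcal L_pu=\operatorname{div}_{\mathcal L}(|\nabla_{\mathcal L}u|^{p-2}\nabla_{\mathcal L}u)$. Dilations. There are dilations $\delta_\lambda(x)=(\lambda^{\beta_1}x_1,\dots,\lambda^{\beta_N}x_N)$, $\beta_j>0$, with each $X_i$ homogeneous of degree one: $X_i(f\circ\delta_\lambda)=\lambda(X_if)\circ\delta_\lambda$. Set $Q=\sum_j\beta_j$. The function $d$. $d:\mathbb R^N\to[0,\infty)$ satisfies: (i) $d\in C(\mathbb R^N)\cap C^\infty(\mathbb R^N\setminus\{0\})$; (ii) $d(x)=0$ iff $x=0$; (iii) $d(\delta_\lambda x)=\lambda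 d(x)$; (iv) for every $p\ge2$, $\mathcal L_p(d^{(p-Q)/(p-1)})=0$ in $\mathbb R^N\setminus\{0\}$ if $p\neq Q$, and $\mathcal L_Q(-\ln d)=0$ there if $p=Q$. *)

theory Defs
  imports "HOL-Analysis.Analysis"
begin

text \<open>Points of R^N are vectors of type real^'n (N = CARD('n)); vector fields
  X_1..X_h are indexed by a finite type 'h (h = CARD('h)), with coefficient
  functions sigma i j : R^N -> R, so that X_i = sum_j sigma i j * partial_j.\<close>

definition partial :: "'n::finite \<Rightarrow> (real^'n \<Rightarrow> real) \<Rightarrow> real^'n \<Rightarrow> real" where
  "partial j f x = deriv (\<lambda>t. f (x + t *\<^sub>R axis j 1)) 0"

definition has_partial :: "'n::finite \<Rightarrow> (real^'n \<Rightarrow> real) \<Rightarrow> real \<Rightarrow> real^'n \<Rightarrow> bool" where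
  "has_partial j f D x \<longleftrightarrow> ((\<lambda>t. f (x + t *\<^sub>R axis j 1)) has_real_derivative D) (at 0)"

fun Ck_on :: "nat \<Rightarrow> (real^'n::finite) set \<Rightarrow> (real^'n \<Rightarrow> real) \<Rightarrow> bool" where
  "Ck_on 0 S f = continuous_on S f"
| "Ck_on (Suc k) S f = (continuous_on S f \<and>
      (\<forall>j. \<forall>x\<in>S. has_partial j f (partial j f x) x) \<and> (\<forall>j. Ck_on k S (partial j f)))"

definition smooth_on :: "(real^'n::finite) set \<Rightarrow> (real^'n \<Rightarrow> real) \<Rightarrow> bool" where
  "smooth_on S f \<longleftrightarrow> (\<forall>k. Ck_on k S f)"

definition gradL :: "('h::finite \<Rightarrow> 'n::finite \<Rightarrow> real^'n \<Rightarrow> real) \<Rightarrow> (real^'n \<Rightarrow> real) \<Rightarrow> real^'n \<Rightarrow> real^'h" where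
  "gradL \<sigma> u x = (\<chi> i. \<Sum>j\<in>UNIV. \<sigma> i j x * partial j u x)"

text \<open>div_L Z = div (sigma^T Z) holds classically at x with value v:
  each partial derivative d/dx_j of (sigma^T Z)_j exists at x and their sum is v.\<close>
definition has_divL :: "('h::finite \<Rightarrow> 'n::finite \<Rightarrow> real^'n \<Rightarrow> real) \<Rightarrow> (real^'n \<Rightarrow> real^'h) \<Rightarrow> real^'n \<Rightarrow> real \<Rightarrow> bool" where
  "has_divL \<sigma> Z x v \<longleftrightarrow> (\<exists>D. (\<forall>j. has_partial j (\<lambda>y. \<Sum>i\<in>UNIV. \<sigma> i j y * Z y $ i) (D j) x)
                               \<and> (\<Sum>j\<in>UNIV. D j) = v)"

text \<open>|xi|^q xi (for q \<ge> 0), with the convention that it is 0 at xi = 0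
  (avoids the Isabelle convention 0 powr 0 = 0).\<close>
definition pfield :: "real \<Rightarrow> real^'h::finite \<Rightarrow> real^'h" where
  "pfield q \<xi> = (if \<xi> = 0 then 0 else norm \<xi> powr q) *\<^sub>R \<xi>"

definition Lp_eq :: "('h::finite \<Rightarrow> 'n::finite \<Rightarrow> real^'n \<Rightarrow> real) \<Rightarrow> real \<Rightarrow> (real^'n \<Rightarrow> real) \<Rightarrow> real^'n \<Rightarrow> real \<Rightarrow> bool" where
  "Lp_eq \<sigma> p u x v \<longleftrightarrow> has_divL \<sigma> (\<lambda>y. pfield (p - 2) (gradL \<sigma> u y)) x v"

definition dil :: "('n::finite \<Rightarrow> real) \<Rightarrow> real \<Rightarrow> real^'n \<Rightarrow> real^'n" where
  "dil \<beta> lam x = (\<chi> j. lam powr \<beta> j * x $ j)"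

end

theory Submission
  imports Defs
begin

lemma pfield_alt: "pfield q \<xi> = norm \<xi> powr q *\<^sub>R \<xi>"
  by (simp add: pfield_def)

lemma pfield_scale: "pfield q (k *\<^sub>R \<xi>) = (\<bar>k\<bar> powr q * k) *\<^sub>R pfield q \<xi>"
  by (simp add: pfield_alt powr_mult)

lemma has_partial_cong:
  assumes "\<forall>y. y \<noteq> 0 \<longrightarrow> f y = g y" "x \<noteq> 0"
  shows "has_partial j f D x = has_partial j g D x"
  unfolding has_partial_def
proof (rule DERIV_cong_ev)
  have "\<forall>\<^sub>F t in nhds (0::real). t \<in> ball 0 (norm x)"
    using assms(2) by (intro eventually_nhds_in_open) auto
  then show "\<forall>\<^sub>F t in nhds 0. f (x + t *\<^sub>R axis j 1) = g (x + t *\<^sub>R axis j 1)"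
  proof (rule eventually_mono)
    fix t :: real assume "t \<in> ball 0 (norm x)"
    hence "x + t *\<^sub>R axis j 1 \<noteq> 0"
    proof (auto simp: add_eq_0_iff)
      assume "\<bar>t\<bar> < norm x" "t *\<^sub>R axis j 1 = - x"
      from this(2) have "norm (t *\<^sub>R axis j (1::real)) = norm (- x)" by (rule arg_cong[where f=norm])
      then have "\<bar>t\<bar> = norm x" by (simp add: norm_axis_1)
      then show False using \<open>\<bar>t\<bar> < norm x\<close> by simp
    qed
    thus "f (x + t *\<^sub>R axis j 1) = g (x + t *\<^sub>R axis j 1)" using assms(1) by blast
  qed
qed auto

lemma has_partial_mult:
  assumes "has_partial j f A x" "has_partial j g B x"
  shows "has_partial j (\<lambda>y. f y * g y) (A * g x + f x * B) x"
  using DERIV_mult[OF assms[unfolded has_partial_def]] unfolding has_partial_def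
  by (simp add: mult.commute)

lemma has_partial_cmult:
  assumes "has_partial j f A x"
  shows "has_partial j (\<lambda>y. c * f y) (c * A) x"
  using DERIV_cmult[OF assms[unfolded has_partial_def]] unfolding has_partial_def
  by simp

lemma has_partial_powr:
  assumes "has_partial j f A x" "f x > 0"
  shows "has_partial j (\<lambda>y. f y powr r) (r * f x powr (r - 1) * A) x"
proof -
  have "((\<lambda>t. f (x + t *\<^sub>R axis j 1) powr r) has_real_derivative
      f x powr r * (0 * ln (f x) + A * r / f x)) (at 0)"
    using DERIV_powr[OF assms(1)[unfolded has_partial_def], of "\<lambda>_. r" 0] assms(2)
    by simp
  moreover have "f x powr r * (0 * ln (f x) + A * r / f x) = r * f x powr (r - 1) * A"
  proof -
    have e: "f x powr (r - 1) = f x powr r / f x" using assms(2) by (simp add: powr_diff)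
    show ?thesis unfolding e using assms(2)
      by (simp only: mult_zero_left add_0_left) (simp add: field_simps)
  qed
  ultimately show ?thesis unfolding has_partial_def by simp
qed

lemma has_partial_nln:
  assumes "has_partial j f A x" "f x > 0"
  shows "has_partial j (\<lambda>y. - ln (f y)) (- (1 / f x) * A) x"
proof -
  have "((\<lambda>t. - ln (f (x + t *\<^sub>R axis j 1))) has_real_derivative - (1 / f x) * A) (at 0)"
  proof -
    have a: "((\<lambda>t. f (x + t *\<^sub>R axis j 1)) has_real_derivative A) (at 0)"
      using assms(1) unfolding has_partial_def .
    have "((\<lambda>t. ln (f (x + t *\<^sub>R axis j 1))) has_real_derivative (1 / f x) * A) (at 0)"
    proof -
      have b: "(ln has_real_derivative 1 / f x) (at (f (x + 0 *\<^sub>R axis j 1)))"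
        using DERIV_ln_divide[OF assms(2)] by simp
      show ?thesis using DERIV_chain2[OF b a] by simp
    qed
    from DERIV_minus[OF this] show ?thesis by simp
  qed
  thus ?thesis unfolding has_partial_def by simp
qed

lemma partial_eq: "has_partial j f D x \<Longrightarrow> partial j f x = D"
  unfolding has_partial_def partial_def by (rule DERIV_imp_deriv)

lemma gradL_scale:
  assumes "\<forall>k. has_partial k u (K * partial k d y) y"
  shows "gradL \<sigma> u y = K *\<^sub>R gradL \<sigma> d y"
  using partial_eq[OF assms[rule_format]]
  by (simp add: gradL_def vec_eq_iff sum_distrib_left algebra_simps)

lemma has_partial_unique: "has_partial j f A x \<Longrightarrow> has_partial j f B x \<Longrightarrow> A = B"
  unfolding has_partial_def by (rule DERIV_unique)

definition Wf :: "('h::finite \<Rightarrow> 'n::finite \<Rightarrow> real^'n \<Rightarrow> real) \<Rightarrow> (real^'n \<Rightarrow> real) \<Rightarrow> real \<Rightarrow> 'n \<Rightarrow> real^'n \<Rightarrow> real" where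
  "Wf \<sigma> d q j y = (\<Sum>i\<in>UNIV. \<sigma> i j y * pfield (q - 2) (gradL \<sigma> d y) $ i)"

lemma lemA0:
  fixes \<sigma> :: "'h::finite \<Rightarrow> 'n::finite \<Rightarrow> real^'n \<Rightarrow> real"
  assumes x0: "x \<noteq> 0"
    and gu: "\<forall>y. y \<noteq> 0 \<longrightarrow> gradL \<sigma> u y = k y *\<^sub>R gradL \<sigma> d y"
    and ks: "\<forall>y. y \<noteq> 0 \<longrightarrow> \<bar>k y\<bar> powr (q - 2) * k y = s * d y powr (1 - Q)"
    and s0: "s \<noteq> 0"
    and dv: "has_divL \<sigma> (\<lambda>y. pfield (q - 2) (gradL \<sigma> u y)) x 0"
  shows "\<exists>D. (\<forall>j. has_partial j (\<lambda>y. d y powr (1 - Q) * Wf \<sigma> d q j y) (D j) x) \<and> sum D UNIV = 0"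
proof -
  from dv obtain DV where h: "\<forall>j. has_partial j (\<lambda>y. \<Sum>i\<in>UNIV. \<sigma> i j y * pfield (q - 2) (gradL \<sigma> u y) $ i) (DV j) x"
    and sd: "sum DV UNIV = 0" unfolding has_divL_def by blast
  have eq: "\<forall>y. y \<noteq> 0 \<longrightarrow> (\<Sum>i\<in>UNIV. \<sigma> i j y * pfield (q - 2) (gradL \<sigma> u y) $ i)
      = s * (d y powr (1 - Q) * Wf \<sigma> d q j y)" for j
  proof (intro allI impI)
    fix y :: "real^'n" assume y: "y \<noteq> 0"
    have "pfield (q - 2) (gradL \<sigma> u y) = (s * d y powr (1 - Q)) *\<^sub>R pfield (q - 2) (gradL \<sigma> d y)"
      using gu ks y by (simp add: pfield_scale)
    then show "(\<Sum>i\<in>UNIV. \<sigma> i j y * pfield (q - 2) (gradL \<sigma> u y) $ i)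
      = s * (d y powr (1 - Q) * Wf \<sigma> d q j y)"
      by (simp add: Wf_def sum_distrib_left mult_ac)
  qed
  have "has_partial j (\<lambda>y. d y powr (1 - Q) * Wf \<sigma> d q j y) (DV j / s) x" for j
  proof -
    have "has_partial j (\<lambda>y. s * (d y powr (1 - Q) * Wf \<sigma> d q j y)) (DV j) x"
      using has_partial_cong[OF eq x0] h by blast
    from has_partial_cmult[OF this, of "1 / s"] show ?thesis using s0 by simp
  qed
  moreover have "(\<Sum>j\<in>UNIV. DV j / s) = 0" using sd by (simp add: sum_divide_distrib[symmetric])
  ultimately show ?thesis by (intro exI[where x="\<lambda>j. DV j / s"]) simp
qed

lemma keyA:
  fixes \<sigma> :: "'h::finite \<Rightarrow> 'n::finite \<Rightarrow> real^'n \<Rightarrow> real"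
  assumes dpos: "\<forall>y. y \<noteq> 0 \<longrightarrow> d y > 0"
    and dpart: "\<forall>j y. y \<noteq> 0 \<longrightarrow> has_partial j d (partial j d y) y"
    and d_fund: "\<forall>q\<ge>2. \<forall>x. x \<noteq> 0 \<longrightarrow>
               (q \<noteq> Q \<longrightarrow> Lp_eq \<sigma> q (\<lambda>y. d y powr ((q - Q) / (q - 1))) x 0) \<and>
               (q = Q \<longrightarrow> Lp_eq \<sigma> q (\<lambda>y. - ln (d y)) x 0)"
    and q: "q \<ge> 2" and x0: "x \<noteq> 0"
  shows "\<exists>D. (\<forall>j. has_partial j (\<lambda>y. d y powr (1 - Q) * Wf \<sigma> d q j y) (D j) x) \<and> sum D UNIV = 0"
proof (cases "q = Q")
  case False
  define a where "a = (q - Q) / (q - 1)"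
  have a0: "a \<noteq> 0" using False q by (simp add: a_def)
  have gu: "\<forall>y. y \<noteq> 0 \<longrightarrow> gradL \<sigma> (\<lambda>y. d y powr a) y = (a * d y powr (a - 1)) *\<^sub>R gradL \<sigma> d y"
  proof (intro allI impI)
    fix y :: "real^'n" assume y: "y \<noteq> 0"
    show "gradL \<sigma> (\<lambda>y. d y powr a) y = (a * d y powr (a - 1)) *\<^sub>R gradL \<sigma> d y"
      by (rule gradL_scale) (use has_partial_powr dpart dpos y in blast)
  qed
  have ks: "\<forall>y. y \<noteq> 0 \<longrightarrow> \<bar>a * d y powr (a - 1)\<bar> powr (q - 2) * (a * d y powr (a - 1))
       = (\<bar>a\<bar> powr (q - 2) * a) * d y powr (1 - Q)"
  proof (intro allI impI)
    fix y :: "real^'n" assume y: "y \<noteq> 0"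
    hence dy: "d y > 0" using dpos by blast
    have "\<bar>a * d y powr (a - 1)\<bar> = \<bar>a\<bar> * d y powr (a - 1)" by (simp add: abs_mult)
    hence 1: "\<bar>a * d y powr (a - 1)\<bar> powr (q - 2) = \<bar>a\<bar> powr (q - 2) * d y powr ((a - 1) * (q - 2))"
      by (simp add: powr_mult powr_powr)
    have am: "a - 1 = (1 - Q) / (q - 1)" using q unfolding a_def by (simp add: field_simps)
    have "(a - 1) * (q - 2) + (a - 1) = (a - 1) * (q - 1)" by algebra
    also have "\<dots> = 1 - Q" unfolding am using q by simp
    finally have "(a - 1) * (q - 2) + (a - 1) = 1 - Q" .
    hence 2: "d y powr ((a - 1) * (q - 2)) * d y powr (a - 1) = d y powr (1 - Q)"
      by (metis powr_add)
    show "\<bar>a * d y powr (a - 1)\<bar> powr (q - 2) * (a * d y powr (a - 1))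
       = (\<bar>a\<bar> powr (q - 2) * a) * d y powr (1 - Q)"
      unfolding 1 2[symmetric] by (simp add: mult_ac)
  qed
  have s0: "\<bar>a\<bar> powr (q - 2) * a \<noteq> 0" using a0 by simp
  have dv: "has_divL \<sigma> (\<lambda>y. pfield (q - 2) (gradL \<sigma> (\<lambda>y. d y powr a) y)) x 0"
    using d_fund q x0 False unfolding Lp_eq_def a_def by blast
  show ?thesis by (rule lemA0[OF x0 gu ks s0 dv])
next
  case True
  have gu: "\<forall>y. y \<noteq> 0 \<longrightarrow> gradL \<sigma> (\<lambda>y. - ln (d y)) y = (- (1 / d y)) *\<^sub>R gradL \<sigma> d y"
  proof (intro allI impI)
    fix y :: "real^'n" assume y: "y \<noteq> 0"
    show "gradL \<sigma> (\<lambda>y. - ln (d y)) y = (- (1 / d y)) *\<^sub>R gradL \<sigma> d y"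
      by (rule gradL_scale) (use has_partial_nln dpart dpos y in blast)
  qed
  have ks: "\<forall>y. y \<noteq> 0 \<longrightarrow> \<bar>- (1 / d y)\<bar> powr (q - 2) * (- (1 / d y)) = (-1) * d y powr (1 - Q)"
  proof (intro allI impI)
    fix y :: "real^'n" assume y: "y \<noteq> 0"
    hence dy: "d y > 0" using dpos by blast
    have e: "\<bar>- (1 / d y)\<bar> = d y powr (-1)" using dy by (simp add: powr_neg_one)
    have "(d y powr (-1)) powr (q - 2) * d y powr (-1) = d y powr ((-1) * (q - 2) + (-1))"
      by (simp only: powr_powr powr_add)
    also have "(-1) * (q - 2) + (-1) = 1 - Q" using True by simp
    finally have "(d y powr (-1)) powr (q - 2) * d y powr (-1) = d y powr (1 - Q)" .
    moreover have f: "- (1 / d y) = - (d y powr (-1))" using dy by (simp add: powr_neg_one)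
    ultimately show "\<bar>- (1 / d y)\<bar> powr (q - 2) * (- (1 / d y)) = (-1) * d y powr (1 - Q)"
      unfolding e f by simp
  qed
  have dv: "has_divL \<sigma> (\<lambda>y. pfield (q - 2) (gradL \<sigma> (\<lambda>y. - ln (d y)) y)) x 0"
    using d_fund q x0 True unfolding Lp_eq_def by blast
  show ?thesis by (rule lemA0[OF x0 gu ks _ dv]) simp
qed

lemma sumW:
  fixes \<sigma> :: "'h::finite \<Rightarrow> 'n::finite \<Rightarrow> real^'n \<Rightarrow> real"
  assumes q: "q > 0"
  shows "(\<Sum>j\<in>UNIV. partial j d x * Wf \<sigma> d q j x) = norm (gradL \<sigma> d x) powr q"
proof -
  define G where "G = gradL \<sigma> d x"
  define pf where "pf = pfield (q - 2) G"
  have "(\<Sum>j\<in>UNIV. partial j d x * Wf \<sigma> d q j x)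
      = (\<Sum>j\<in>UNIV. \<Sum>i\<in>UNIV. partial j d x * (\<sigma> i j x * pf $ i))"
    by (simp add: Wf_def sum_distrib_left pf_def G_def)
  also have "\<dots> = (\<Sum>i\<in>UNIV. \<Sum>j\<in>UNIV. partial j d x * (\<sigma> i j x * pf $ i))"
    by (rule sum.swap)
  also have "\<dots> = (\<Sum>i\<in>UNIV. G $ i * pf $ i)"
    by (simp add: G_def gradL_def sum_distrib_left mult_ac)
  also have "\<dots> = G \<bullet> pf" by (simp add: inner_vec_def)
  also have "\<dots> = norm G powr (q - 2) * (norm G)\<^sup>2"
    by (simp add: pf_def pfield_alt power2_norm_eq_inner)
  also have "\<dots> = norm G powr q"
  proof (cases "norm G = 0")
    case True then show ?thesis using q by simp
  next
    case False
    hence "norm G > 0" by simp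
    hence "(norm G)\<^sup>2 = norm G powr 2" by (simp add: powr_realpow)
    moreover have "norm G powr (q - 2) * norm G powr 2 = norm G powr (q - 2 + 2)"
      by (rule powr_add[symmetric])
    ultimately show ?thesis by simp
  qed
  finally show ?thesis by (simp add: G_def)
qed

lemma partB:
  fixes \<sigma> :: "'h::finite \<Rightarrow> 'n::finite \<Rightarrow> real^'n \<Rightarrow> real"
  assumes dpos: "\<forall>y. y \<noteq> 0 \<longrightarrow> d y > 0"
    and dpart: "\<forall>j y. y \<noteq> 0 \<longrightarrow> has_partial j d (partial j d y) y"
    and d_fund: "\<forall>q\<ge>2. \<forall>x. x \<noteq> 0 \<longrightarrow>
               (q \<noteq> Q \<longrightarrow> Lp_eq \<sigma> q (\<lambda>y. d y powr ((q - Q) / (q - 1))) x 0) \<and>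
               (q = Q \<longrightarrow> Lp_eq \<sigma> q (\<lambda>y. - ln (d y)) x 0)"
    and q: "q \<ge> 2" and x0: "x \<noteq> 0"
  shows "has_divL \<sigma> (\<lambda>y. pfield (q - 2) (gradL \<sigma> d y)) x ((Q - 1) * norm (gradL \<sigma> d x) powr q / d x)"
proof -
  obtain D where hD: "\<forall>j. has_partial j (\<lambda>y. d y powr (1 - Q) * Wf \<sigma> d q j y) (D j) x"
    and sD: "sum D UNIV = 0"
    using keyA[OF dpos dpart d_fund q x0] by blast
  have dx: "d x > 0" using dpos x0 by blast
  define E where "E j = (Q - 1) * d x powr (Q - 1 - 1) * partial j d x * (d x powr (1 - Q) * Wf \<sigma> d q j x)
     + d x powr (Q - 1) * D j" for j
  have eq: "\<forall>y. y \<noteq> 0 \<longrightarrow> d y powr (Q - 1) * (d y powr (1 - Q) * Wf \<sigma> d q j y)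
      = (\<Sum>i\<in>UNIV. \<sigma> i j y * pfield (q - 2) (gradL \<sigma> d y) $ i)" for j
  proof (intro allI impI)
    fix y :: "real^'n" assume "y \<noteq> 0"
    hence dy: "d y > 0" using dpos by blast
    have "d y powr (Q - 1) * d y powr (1 - Q) = 1" using dy by (simp add: powr_add[symmetric])
    then show "d y powr (Q - 1) * (d y powr (1 - Q) * Wf \<sigma> d q j y)
      = (\<Sum>i\<in>UNIV. \<sigma> i j y * pfield (q - 2) (gradL \<sigma> d y) $ i)"
      by (simp add: Wf_def mult.assoc[symmetric])
  qed
  have hE: "has_partial j (\<lambda>y. \<Sum>i\<in>UNIV. \<sigma> i j y * pfield (q - 2) (gradL \<sigma> d y) $ i) (E j) x" for j
  proof -
    have "has_partial j (\<lambda>y. d y powr (Q - 1) * (d y powr (1 - Q) * Wf \<sigma> d q j y)) (E j) x"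
      unfolding E_def
      by (rule has_partial_mult[OF has_partial_powr[OF dpart[rule_format, OF x0] dx] hD[rule_format]])
    then show ?thesis using has_partial_cong[OF eq x0] by blast
  qed
  have c: "d x powr (Q - 1 - 1) * d x powr (1 - Q) = 1 / d x"
  proof -
    have "d x powr (Q - 1 - 1) * d x powr (1 - Q) = d x powr (-1)" by (simp add: powr_add[symmetric])
    then show ?thesis using dx by (simp add: powr_neg_one)
  qed
  have "sum E UNIV = (Q - 1) * (d x powr (Q - 1 - 1) * d x powr (1 - Q))
       * (\<Sum>j\<in>UNIV. partial j d x * Wf \<sigma> d q j x) + d x powr (Q - 1) * sum D UNIV"
    by (simp add: E_def sum.distrib sum_distrib_left sum_distrib_right mult_ac)
  also have "\<dots> = (Q - 1) * norm (gradL \<sigma> d x) powr q / d x"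
  proof -
    have sw: "(\<Sum>j\<in>UNIV. partial j d x * Wf \<sigma> d q j x) = norm (gradL \<sigma> d x) powr q"
      by (rule sumW) (use q in linarith)
    show ?thesis unfolding c sD sw by simp
  qed
  finally show ?thesis unfolding has_divL_def using hE by blast
qed

lemma partC:
  fixes \<sigma> :: "'h::finite \<Rightarrow> 'n::finite \<Rightarrow> real^'n \<Rightarrow> real"
  assumes dpos: "\<forall>y. y \<noteq> 0 \<longrightarrow> d y > 0"
    and dpart: "\<forall>j y. y \<noteq> 0 \<longrightarrow> has_partial j d (partial j d y) y"
    and d_fund: "\<forall>q\<ge>2. \<forall>x. x \<noteq> 0 \<longrightarrow>
               (q \<noteq> Q \<longrightarrow> Lp_eq \<sigma> q (\<lambda>y. d y powr ((q - Q) / (q - 1))) x 0) \<and>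
               (q = Q \<longrightarrow> Lp_eq \<sigma> q (\<lambda>y. - ln (d y)) x 0)"
    and x0: "x \<noteq> 0"
    and hD: "\<forall>j. has_partial j (\<lambda>y. norm (gradL \<sigma> d y)) (D j) x"
  shows "(\<Sum>i\<in>UNIV. (\<Sum>j\<in>UNIV. \<sigma> i j x * D j) * gradL \<sigma> d x $ i) = 0"
proof -
  define n where "n = norm (gradL \<sigma> d x)"
  define H where "H = (\<lambda>j y. \<Sum>i\<in>UNIV. \<sigma> i j y * gradL \<sigma> d y $ i)"
  have p0: "pfield 0 \<xi> = \<xi>" for \<xi> :: "real^'h" by (simp add: pfield_def)
  have p1: "pfield 1 \<xi> = norm \<xi> *\<^sub>R \<xi>" for \<xi> :: "real^'h" by (simp add: pfield_alt)
  obtain E2 where h2: "\<forall>j. has_partial j (\<lambda>y. \<Sum>i\<in>UNIV. \<sigma> i j y * pfield (2 - 2) (gradL \<sigma> d y) $ i) (E2 j) x"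
    and s2: "sum E2 UNIV = (Q - 1) * n powr 2 / d x"
    using partB[OF dpos dpart d_fund, of 2 x] x0 unfolding has_divL_def n_def by auto
  obtain E3 where h3: "\<forall>j. has_partial j (\<lambda>y. \<Sum>i\<in>UNIV. \<sigma> i j y * pfield (3 - 2) (gradL \<sigma> d y) $ i) (E3 j) x"
    and s3: "sum E3 UNIV = (Q - 1) * n powr 3 / d x"
    using partB[OF dpos dpart d_fund, of 3 x] x0 unfolding has_divL_def n_def by auto
  have h2': "has_partial j (H j) (E2 j) x" for j
    using h2 by (simp add: H_def p0)
  have h3': "has_partial j (\<lambda>y. norm (gradL \<sigma> d y) * H j y) (E3 j) x" for j
    using h3 by (simp add: H_def p1 sum_distrib_left mult_ac)
  have e3: "E3 j = D j * H j x + n * E2 j" for j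
    unfolding n_def by (rule has_partial_unique[OF h3' has_partial_mult[OF hD[rule_format] h2']])
  have "sum E3 UNIV = (\<Sum>j\<in>UNIV. D j * H j x) + n * sum E2 UNIV"
    by (simp add: e3 sum.distrib sum_distrib_left)
  moreover have "n powr 3 = n * n powr 2"
  proof (cases "n = 0")
    case True then show ?thesis by simp
  next
    case False
    have "n powr 3 = n powr (1 + 2)" by simp
    also have "\<dots> = n powr 1 * n powr 2" by (rule powr_add)
    finally show ?thesis using False by (simp add: n_def)
  qed
  ultimately have "(Q - 1) * (n * n powr 2) / d x = (\<Sum>j\<in>UNIV. D j * H j x) + n * ((Q - 1) * n powr 2) / d x"
    using s2 s3 by simp
  moreover have "n * ((Q - 1) * n powr 2) / d x = (Q - 1) * (n * n powr 2) / d x" by (simp add: mult_ac)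
  ultimately have z: "(\<Sum>j\<in>UNIV. D j * H j x) = 0" by linarith
  have "(\<Sum>i\<in>UNIV. (\<Sum>j\<in>UNIV. \<sigma> i j x * D j) * gradL \<sigma> d x $ i)
      = (\<Sum>i\<in>UNIV. \<Sum>j\<in>UNIV. D j * (\<sigma> i j x * gradL \<sigma> d x $ i))"
    by (simp add: sum_distrib_right sum_distrib_left mult_ac)
  also have "\<dots> = (\<Sum>j\<in>UNIV. \<Sum>i\<in>UNIV. D j * (\<sigma> i j x * gradL \<sigma> d x $ i))"
    by (rule sum.swap)
  also have "\<dots> = (\<Sum>j\<in>UNIV. D j * H j x)"
    by (simp add: H_def sum_distrib_left)
  finally show ?thesis using z by simp
qed


theorem mainTheorem6:
  fixes \<sigma> :: "'h::finite \<Rightarrow> 'n::finite \<Rightarrow> real^'n \<Rightarrow> real"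
    and \<beta> :: "'n \<Rightarrow> real" and d :: "real^'n \<Rightarrow> real" and Q p \<alpha> :: real
  assumes hN: "CARD('h) \<le> CARD('n)"
    and sigma_cont: "\<forall>i j. continuous_on UNIV (\<sigma> i j)"
    and sigma_pd: "\<forall>i j. \<forall>x. has_partial j (\<sigma> i j) (partial j (\<sigma> i j) x) x"
    and sigma_pd_cont: "\<forall>i j. continuous_on UNIV (partial j (\<sigma> i j))"
    and beta_pos: "\<forall>j. \<beta> j > 0"
    and hom: "\<forall>lam>0. \<forall>f. smooth_on UNIV f \<longrightarrow>
               (\<forall>x. gradL \<sigma> (f \<circ> dil \<beta> lam) x = lam *\<^sub>R gradL \<sigma> f (dil \<beta> lam x))"
    and Q_def: "Q = (\<Sum>j\<in>UNIV. \<beta> j)"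
    and d_nonneg: "\<forall>x. d x \<ge> 0"
    and d_cont: "continuous_on UNIV d"
    and d_smooth: "smooth_on (- {0}) d"
    and d_zero: "\<forall>x. d x = 0 \<longleftrightarrow> x = 0"
    and d_hom: "\<forall>lam>0. \<forall>x. d (dil \<beta> lam x) = lam * d x"
    and d_fund: "\<forall>q\<ge>2. \<forall>x. x \<noteq> 0 \<longrightarrow>
               (q \<noteq> Q \<longrightarrow> Lp_eq \<sigma> q (\<lambda>y. d y powr ((q - Q) / (q - 1))) x 0) \<and>
               (q = Q \<longrightarrow> Lp_eq \<sigma> q (\<lambda>y. - ln (d y)) x 0)"
    and p: "p \<ge> 2" and alpha: "\<alpha> \<ge> 0"
  shows "\<forall>x. x \<noteq> 0 \<longrightarrow>
           Lp_eq \<sigma> p d x ((Q - 1) * norm (gradL \<sigma> d x) powr p / d x)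
         \<and> (\<forall>D. (\<forall>j. has_partial j (\<lambda>y. norm (gradL \<sigma> d y)) (D j) x) \<longrightarrow>
               (\<Sum>i\<in>UNIV. (\<Sum>j\<in>UNIV. \<sigma> i j x * D j) * gradL \<sigma> d x $ i) = 0)
         \<and> has_divL \<sigma> (\<lambda>y. (1 / d y powr (Q - 1)) *\<^sub>R pfield (\<alpha> + p - 2) (gradL \<sigma> d y)) x 0"
proof -
  have dpos: "\<forall>y. y \<noteq> 0 \<longrightarrow> d y > 0"
  proof (intro allI impI)
    fix y :: "real^'n" assume "y \<noteq> 0"
    then have "d y \<noteq> 0" using d_zero by blast
    moreover have "d y \<ge> 0" using d_nonneg by blast
    ultimately show "d y > 0" by linarith
  qed
  have "Ck_on (Suc 0) (- {0}) d" using d_smooth unfolding smooth_on_def by blast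
  hence dpart: "\<forall>j y. y \<noteq> 0 \<longrightarrow> has_partial j d (partial j d y) y" by simp
  show ?thesis
  proof (rule allI, rule impI)
    fix x :: "real^'n" assume x0: "x \<noteq> 0"
    have A: "Lp_eq \<sigma> p d x ((Q - 1) * norm (gradL \<sigma> d x) powr p / d x)"
      unfolding Lp_eq_def by (rule partB[OF dpos dpart d_fund p x0])
    have B: "\<forall>D. (\<forall>j. has_partial j (\<lambda>y. norm (gradL \<sigma> d y)) (D j) x) \<longrightarrow>
               (\<Sum>i\<in>UNIV. (\<Sum>j\<in>UNIV. \<sigma> i j x * D j) * gradL \<sigma> d x $ i) = 0"
      using partC[OF dpos dpart d_fund x0] by blast
    have q: "\<alpha> + p \<ge> 2" using alpha p by simp
    obtain D where hD: "\<forall>j. has_partial j (\<lambda>y. d y powr (1 - Q) * Wf \<sigma> d (\<alpha> + p) j y) (D j) x"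
      and sD: "sum D UNIV = 0"
      using keyA[OF dpos dpart d_fund q x0] by blast
    have eq: "\<forall>y. y \<noteq> 0 \<longrightarrow> d y powr (1 - Q) * Wf \<sigma> d (\<alpha> + p) j y =
       (\<Sum>i\<in>UNIV. \<sigma> i j y * ((1 / d y powr (Q - 1)) *\<^sub>R pfield (\<alpha> + p - 2) (gradL \<sigma> d y)) $ i)" for j
    proof (intro allI impI)
      fix y :: "real^'n" assume "y \<noteq> 0"
      have e: "d y powr (1 - Q) = 1 / d y powr (Q - 1)"
        using powr_minus_divide[of "d y" "Q - 1"] by simp
      show "d y powr (1 - Q) * Wf \<sigma> d (\<alpha> + p) j y =
       (\<Sum>i\<in>UNIV. \<sigma> i j y * ((1 / d y powr (Q - 1)) *\<^sub>R pfield (\<alpha> + p - 2) (gradL \<sigma> d y)) $ i)"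
        unfolding e by (simp add: Wf_def sum_distrib_left mult_ac)
    qed
    have C: "has_divL \<sigma> (\<lambda>y. (1 / d y powr (Q - 1)) *\<^sub>R pfield (\<alpha> + p - 2) (gradL \<sigma> d y)) x 0"
    proof -
      have hj: "has_partial j (\<lambda>y. \<Sum>i\<in>UNIV. \<sigma> i j y * ((1 / d y powr (Q - 1)) *\<^sub>R pfield (\<alpha> + p - 2) (gradL \<sigma> d y)) $ i) (D j) x" for j
      proof -
        have "has_partial j (\<lambda>y. d y powr (1 - Q) * Wf \<sigma> d (\<alpha> + p) j y) (D j) x"
          using hD by blast
        with has_partial_cong[OF eq x0] show ?thesis by (rule iffD1)
      qed
      show ?thesis unfolding has_divL_def
        by (rule exI[of _ D]) (use hj sD in blast)
    qed
    show "Lp_eq \<sigma> p d x ((Q - 1) * norm (gradL \<sigma> d x) powr p / d x)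
         \<and> (\<forall>D. (\<forall>j. has_partial j (\<lambda>y. norm (gradL \<sigma> d y)) (D j) x) \<longrightarrow>
               (\<Sum>i\<in>UNIV. (\<Sum>j\<in>UNIV. \<sigma> i j x * D j) * gradL \<sigma> d x $ i) = 0)
         \<and> has_divL \<sigma> (\<lambda>y. (1 / d y powr (Q - 1)) *\<^sub>R pfield (\<alpha> + p - 2) (gradL \<sigma> d y)) x 0"
      using A B C by blast
  qed
qed

end
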